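(* Let $a\ge a_0$. If $(DFE_a)$ admits a solution on $\mathbf V$, then there is a cycle $\xi$ in $\mathbf X$ with $\sigma_a(\xi)=0$.
   Context: Network $\Gamma$ with finite arcs $\mathcal E$ closed under inversion, vertices $\mathbf V$, connected; Hamiltonians $H_\gamma$ continuous, coercive, quasiconvex with $\mathrm{Int}\{H_\gamma(s,\cdot)\le b\}=\{H_\gamma(s,\cdot)<b\}$, $H_{\tilde\gamma}(s,p)=H_\gamma(1-s,-p)$; $a_0$ = max of $\max_s\min_pH_\gamma$ over non-closed arcs and of $c_\gamma$ (least level admitting a periodic viscosity subsolution) over closed arcs. Graph $\mathbf X=(\mathbf V,\mathbf E)$, bijection $\Psi:\mathbf E\to\mathcal E$, $\mathrm o(e)=\Psi(e)(0)$, $\mathrm t(e)=\Psi(e)(1)$, $-e=\Psi^{-1}(\widetilde{\Psi(e)})$, $\mathbf E_x=\{e:\mathrm o(e)=x\}$, $\sigma_a(e)=\int_0^1\max\{p:H_{\Psi(e)}(t,p)=a\}dt$. Cycle: $\xi=(e_1,\dots,e_M)$, $M\ge1$, $\mathrm t(e_j)=\mathrm o(e_{j+1})$, $\mathrm t(e_M)=\mathrm o(e_1)$; $\sigma_a(\xi)=\sum\sigma_a(e_i)$. $(DFE_a)$: $u(x)=\min_{e\in\mathbf E_x}(u(\mathrm t(e))+\sigma_a(-e))$ for all $x\in\mathbf V$. *)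

theory Defs
  imports "HOL-Analysis.Analysis"
begin

text \<open>Abstract graph X = (V, E): edges are identified with the arcs via the bijection Psi.
  org e = o(e) = Psi(e)(0), tgt e = t(e) = Psi(e)(1), inv_arc e = -e (the reversed arc).\<close>

definition graph_ok :: "'v set \<Rightarrow> 'e set \<Rightarrow> ('e \<Rightarrow> 'v) \<Rightarrow> ('e \<Rightarrow> 'v) \<Rightarrow> ('e \<Rightarrow> 'e) \<Rightarrow> bool" where
  "graph_ok V E org tgt inv_arc \<longleftrightarrow>
     finite V \<and> finite E \<and> E \<noteq> {} \<and>
     (\<forall>e\<in>E. org e \<in> V \<and> tgt e \<in> V \<and> inv_arc e \<in> E \<and> inv_arc e \<noteq> e \<and> inv_arc (inv_arc e) = e \<and>
              org (inv_arc e) = tgt e \<and> tgt (inv_arc e) = org e)"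

definition graph_connected :: "'v set \<Rightarrow> 'e set \<Rightarrow> ('e \<Rightarrow> 'v) \<Rightarrow> ('e \<Rightarrow> 'v) \<Rightarrow> bool" where
  "graph_connected V E org tgt \<longleftrightarrow>
     (\<forall>x\<in>V. \<forall>y\<in>V. (x, y) \<in> {(org e, tgt e) | e. e \<in> E}\<^sup>*)"

definition hamiltonian_ok :: "(real \<Rightarrow> real \<Rightarrow> real) \<Rightarrow> bool" where
  "hamiltonian_ok h \<longleftrightarrow>
     continuous_on ({0..1} \<times> UNIV) (\<lambda>(s, p). h s p) \<and>
     (\<forall>M. \<exists>R. \<forall>s\<in>{0..1}. \<forall>p. \<bar>p\<bar> \<ge> R \<longrightarrow> h s p \<ge> M) \<and>
     (\<forall>s\<in>{0..1}. \<forall>b. convex {p. h s p \<le> b}) \<and>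
     (\<forall>s\<in>{0..1}. \<forall>b. interior {p. h s p \<le> b} = {p. h s p < b})"

definition periodic_visc_subsol :: "(real \<Rightarrow> real \<Rightarrow> real) \<Rightarrow> real \<Rightarrow> (real \<Rightarrow> real) \<Rightarrow> bool" where
  "periodic_visc_subsol h b u \<longleftrightarrow>
     continuous_on UNIV u \<and> (\<forall>s. u (s + 1) = u s) \<and>
     (\<forall>x \<phi> \<phi>'. (\<forall>y. (\<phi> has_real_derivative \<phi>' y) (at y)) \<and> continuous_on UNIV \<phi>' \<and>
        (\<exists>\<delta>>0. \<forall>y. \<bar>y - x\<bar> < \<delta> \<longrightarrow> u y - \<phi> y \<le> u x - \<phi> x)
        \<longrightarrow> h (frac x) (\<phi>' x) \<le> b)"

definition crit_closed :: "(real \<Rightarrow> real \<Rightarrow> real) \<Rightarrow> real" where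
  "crit_closed h = Inf {b. \<exists>u. periodic_visc_subsol h b u}"

definition a0 :: "'e set \<Rightarrow> ('e \<Rightarrow> 'v) \<Rightarrow> ('e \<Rightarrow> 'v) \<Rightarrow> ('e \<Rightarrow> real \<Rightarrow> real \<Rightarrow> real) \<Rightarrow> real" where
  "a0 E org tgt H = Max ((\<lambda>e. if org e = tgt e then crit_closed (H e)
                               else (SUP s\<in>{0..1}. INF p. H e s p)) ` E)"

definition sigma :: "('e \<Rightarrow> real \<Rightarrow> real \<Rightarrow> real) \<Rightarrow> real \<Rightarrow> 'e \<Rightarrow> real" where
  "sigma H a e = integral {0..1} (\<lambda>t. Sup {p. H e t p = a})"

definition is_cycle :: "'e set \<Rightarrow> ('e \<Rightarrow> 'v) \<Rightarrow> ('e \<Rightarrow> 'v) \<Rightarrow> 'e list \<Rightarrow> bool" where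
  "is_cycle E org tgt xs \<longleftrightarrow> xs \<noteq> [] \<and> set xs \<subseteq> E \<and>
     (\<forall>j. Suc j < length xs \<longrightarrow> tgt (xs ! j) = org (xs ! Suc j)) \<and>
     tgt (last xs) = org (hd xs)"

definition sigma_cycle :: "('e \<Rightarrow> real \<Rightarrow> real \<Rightarrow> real) \<Rightarrow> real \<Rightarrow> 'e list \<Rightarrow> real" where
  "sigma_cycle H a xs = sum_list (map (sigma H a) xs)"

definition DFE_solution :: "'v set \<Rightarrow> 'e set \<Rightarrow> ('e \<Rightarrow> 'v) \<Rightarrow> ('e \<Rightarrow> 'v) \<Rightarrow> ('e \<Rightarrow> 'e)
     \<Rightarrow> ('e \<Rightarrow> real \<Rightarrow> real \<Rightarrow> real) \<Rightarrow> real \<Rightarrow> ('v \<Rightarrow> real) \<Rightarrow> bool" where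
  "DFE_solution V E org tgt inv_arc H a u \<longleftrightarrow>
     (\<forall>x\<in>V. u x = Min ((\<lambda>e. u (tgt e) + sigma H a (inv_arc e)) ` {e\<in>E. org e = x}))"

end

theory Submission
  imports Defs
begin

theorem proposition6p17:
  fixes V :: "'v set" and E :: "'e set" and org tgt :: "'e \<Rightarrow> 'v" and inv_arc :: "'e \<Rightarrow> 'e"
    and H :: "'e \<Rightarrow> real \<Rightarrow> real \<Rightarrow> real" and a :: real
  assumes "graph_ok V E org tgt inv_arc"
    and "graph_connected V E org tgt"
    and "\<forall>e\<in>E. hamiltonian_ok (H e)"
    and "\<forall>e\<in>E. \<forall>s\<in>{0..1}. \<forall>p. H (inv_arc e) s p = H e (1 - s) (- p)"
    and "a \<ge> a0 E org tgt H"
    and "\<exists>u. DFE_solution V E org tgt inv_arc H a u"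
  shows "\<exists>\<xi>. is_cycle E org tgt \<xi> \<and> sigma_cycle H a \<xi> = 0"
proof -
  have G: "finite V" "finite E" "E \<noteq> {}"
    "\<And>e. e \<in> E \<Longrightarrow> org e \<in> V \<and> tgt e \<in> V \<and> inv_arc e \<in> E \<and>
              org (inv_arc e) = tgt e \<and> tgt (inv_arc e) = org e"
    using assms(1) unfolding graph_ok_def by auto
  obtain u where u: "\<And>x. x \<in> V \<Longrightarrow> u x = Min ((\<lambda>e. u (tgt e) + sigma H a (inv_arc e)) ` {e\<in>E. org e = x})"
    using assms(6) unfolding DFE_solution_def by blast
  have ne: "{e\<in>E. org e = x} \<noteq> {}" if "x \<in> V" for x
  proof -
    obtain e0 where e0: "e0 \<in> E" using G(3) by blast
    show ?thesis
    proof (cases "x = org e0")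
      case True thus ?thesis using e0 by blast
    next
      case False
      have "(x, org e0) \<in> {(org e, tgt e) | e. e \<in> E}\<^sup>*"
        using assms(2) that G(4)[OF e0] unfolding graph_connected_def by blast
      then show ?thesis using False
        by (cases rule: converse_rtranclE) auto
    qed
  qed
  have ex: "\<exists>e. e \<in> E \<and> org e = x \<and> u x = u (tgt e) + sigma H a (inv_arc e)" if "x \<in> V" for x
  proof -
    have "u x \<in> (\<lambda>e. u (tgt e) + sigma H a (inv_arc e)) ` {e\<in>E. org e = x}"
      unfolding u[OF that] using ne[OF that] G(2) by (intro Min_in) auto
    thus ?thesis by auto
  qed
  define f where "f x = (SOME e. e \<in> E \<and> org e = x \<and> u x = u (tgt e) + sigma H a (inv_arc e))" for x
  have f: "f x \<in> E \<and> org (f x) = x \<and> u x = u (tgt (f x)) + sigma H a (inv_arc (f x))" if "x \<in> V" for x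
    unfolding f_def using someI_ex[OF ex[OF that]] .
  obtain x0 where x0: "x0 \<in> V" using G(3,4) by blast
  define g where "g x = tgt (f x)" for x
  define xs where "xs n = (g ^^ n) x0" for n
  have xsV: "xs n \<in> V" for n
    by (induction n) (auto simp: xs_def g_def x0 G(4) f)
  have xsS: "xs (Suc n) = tgt (f (xs n))" for n by (simp add: xs_def g_def)
  have "\<not> inj_on xs {..card V}"
  proof
    assume "inj_on xs {..card V}"
    hence "card (xs ` {..card V}) = Suc (card V)" by (simp add: card_image)
    moreover have "card (xs ` {..card V}) \<le> card V"
      using xsV G(1) by (intro card_mono) auto
    ultimately show False by simp
  qed
  then obtain i j where ij: "i < j" "xs i = xs j"
    unfolding inj_on_def by (metis linorder_neqE_nat)
  define \<xi> where "\<xi> = map (\<lambda>n. inv_arc (f (xs n))) (rev [i..<j])"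
  have len: "length \<xi> = j - i" by (simp add: \<xi>_def)
  have nth: "\<xi> ! m = inv_arc (f (xs (j - 1 - m)))" if "m < j - i" for m
    using that by (simp add: \<xi>_def rev_nth)
  have cyc: "is_cycle E org tgt \<xi>"
    unfolding is_cycle_def
  proof (intro conjI allI impI)
    show "\<xi> \<noteq> []" using ij by (simp add: \<xi>_def)
    show "set \<xi> \<subseteq> E" using f xsV G(4) by (auto simp: \<xi>_def)
  next
    fix m assume m: "Suc m < length \<xi>"
    hence eq: "j - 1 - m = Suc (j - 1 - Suc m)" using len by simp
    show "tgt (\<xi> ! m) = org (\<xi> ! Suc m)"
      using m len nth[of m] nth[of "Suc m"] f[OF xsV] G(4) xsV
      by (metis eq Suc_lessD xsS)
  next
    have "last \<xi> = inv_arc (f (xs i))" using ij(1) by (simp add: \<xi>_def last_map last_rev hd_upt)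
    moreover have "hd \<xi> = inv_arc (f (xs (j - 1)))" proof -
      have "[i..<j] = [i..<j-1] @ [j-1]" using ij(1) upt_Suc_append[of i "j-1"] by simp
      thus ?thesis by (simp add: \<xi>_def)
    qed
    moreover have "xs j = tgt (f (xs (j - 1)))" using ij xsS[of "j - 1"] by simp
    ultimately show "tgt (last \<xi>) = org (hd \<xi>)"
      using f[OF xsV] G(4) ij(2) by metis
  qed
  have "sigma_cycle H a \<xi> = (\<Sum>n\<leftarrow>[i..<j]. sigma H a (inv_arc (f (xs n))))"
    unfolding sigma_cycle_def \<xi>_def by (simp add: rev_map[symmetric] sum_list_rev o_def)
  also have "\<dots> = (\<Sum>n=i..<j. sigma H a (inv_arc (f (xs n))))"
    by (simp add: interv_sum_list_conv_sum_set_nat)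
  also have "\<dots> = (\<Sum>n=i..<j. u (xs n) - u (xs (Suc n)))"
    using f[OF xsV] xsS by (intro sum.cong) (auto simp: algebra_simps)
  also have "\<dots> = u (xs i) - u (xs j)"
    using sum_Suc_diff'[of i j "\<lambda>n. - u (xs n)"] ij by simp
  also have "\<dots> = 0" using ij by simp
  finally show ?thesis using cyc by blast
qed

end
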